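(* Let $T=T^{n-1}$ act linearly on $\mathbb{C}^n$ by a representation in general position. Then the orbit space $\mathbb{C}^n/T$ is homeomorphic to $\mathbb{R}^{n+1}$.
   Context: A representation of $T^{n-1}$ on $\mathbb{C}^n$ decomposes as $V(\alpha_1)\oplus\cdots\oplus V(\alpha_n)$ with weights $\alpha_i\in\mathrm{Hom}(T,S^1)\cong\mathbb{Z}^{n-1}$, where $V(\alpha)$ is $\mathbb{C}$ with $t\cdot z=\alpha(t)z$. It is in general position if every $n-1$ of the $n$ weights are linearly independent. *)

theory Defs
  imports "HOL-Analysis.Analysis"
begin

definition Complex_space :: "nat \<Rightarrow> (nat \<Rightarrow> complex) topology" where
  "Complex_space n = subtopology (product_topology (\<lambda>_. euclidean) UNIV) {z. \<forall>i\<ge>n. z i = 0}"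

definition torus :: "nat \<Rightarrow> (nat \<Rightarrow> complex) set" where
  "torus m = {t. (\<forall>j<m. norm (t j) = 1) \<and> (\<forall>j\<ge>m. t j = 1)}"

definition character :: "nat \<Rightarrow> (nat \<Rightarrow> int) \<Rightarrow> (nat \<Rightarrow> complex) \<Rightarrow> complex" where
  "character m w t = (\<Prod>j<m. t j powi w j)"

definition torus_act :: "nat \<Rightarrow> (nat \<Rightarrow> nat \<Rightarrow> int) \<Rightarrow> (nat \<Rightarrow> complex) \<Rightarrow> (nat \<Rightarrow> complex) \<Rightarrow> (nat \<Rightarrow> complex)" where
  "torus_act n \<alpha> t z = (\<lambda>i. if i < n then character (n - 1) (\<alpha> i) t * z i else 0)"

definition torus_orbit :: "nat \<Rightarrow> (nat \<Rightarrow> nat \<Rightarrow> int) \<Rightarrow> (nat \<Rightarrow> complex) \<Rightarrow> (nat \<Rightarrow> complex) set" where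
  "torus_orbit n \<alpha> z = (\<lambda>t. torus_act n \<alpha> t z) ` torus (n - 1)"

definition quotient_topology :: "'a topology \<Rightarrow> ('a \<Rightarrow> 'a set) \<Rightarrow> 'a set topology" where
  "quotient_topology X cls =
     topology (\<lambda>U. U \<subseteq> cls ` topspace X \<and> openin X {x \<in> topspace X. cls x \<in> U})"

lemma istopology_quotient_topology:
  "istopology (\<lambda>U. U \<subseteq> cls ` topspace X \<and> openin X {x \<in> topspace X. cls x \<in> U})"
  unfolding istopology_def
proof safe
  fix S T assume "S \<subseteq> cls ` topspace X" "openin X {x \<in> topspace X. cls x \<in> S}"
    "T \<subseteq> cls ` topspace X" "openin X {x \<in> topspace X. cls x \<in> T}"
  then have "openin X ({x \<in> topspace X. cls x \<in> S} \<inter> {x \<in> topspace X. cls x \<in> T})" by blast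
  moreover have "{x \<in> topspace X. cls x \<in> S \<inter> T} = {x \<in> topspace X. cls x \<in> S} \<inter> {x \<in> topspace X. cls x \<in> T}" by blast
  ultimately show "openin X {x \<in> topspace X. cls x \<in> S \<inter> T}" by simp
next
  fix K assume K: "\<forall>U\<in>K. U \<subseteq> cls ` topspace X \<and> openin X {x \<in> topspace X. cls x \<in> U}"
  have "{x \<in> topspace X. cls x \<in> \<Union>K} = (\<Union>U\<in>K. {x \<in> topspace X. cls x \<in> U})" by blast
  moreover have "openin X (\<Union>U\<in>K. {x \<in> topspace X. cls x \<in> U})" using K by blast
  ultimately show "openin X {x \<in> topspace X. cls x \<in> \<Union>K}" by simp
qed auto

lemma openin_quotient_topology:
  "openin (quotient_topology X cls) U \<longleftrightarrow> U \<subseteq> cls ` topspace X \<and> openin X {x \<in> topspace X. cls x \<in> U}"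
  unfolding quotient_topology_def by (simp add: istopology_quotient_topology)

definition orbit_space :: "nat \<Rightarrow> (nat \<Rightarrow> nat \<Rightarrow> int) \<Rightarrow> (nat \<Rightarrow> complex) set topology" where
  "orbit_space n \<alpha> = quotient_topology (Complex_space n) (torus_orbit n \<alpha>)"

definition weights_independent :: "nat \<Rightarrow> (nat \<Rightarrow> nat \<Rightarrow> int) \<Rightarrow> nat set \<Rightarrow> bool" where
  "weights_independent m \<alpha> S \<longleftrightarrow>
     (\<forall>c :: nat \<Rightarrow> int. (\<forall>j<m. (\<Sum>i\<in>S. c i * \<alpha> i j) = 0) \<longrightarrow> (\<forall>i\<in>S. c i = 0))"

definition general_position :: "nat \<Rightarrow> (nat \<Rightarrow> nat \<Rightarrow> int) \<Rightarrow> bool" where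
  "general_position n \<alpha> \<longleftrightarrow>
     (\<forall>S. S \<subseteq> {..<n} \<and> card S = n - 1 \<longrightarrow> weights_independent (n - 1) \<alpha> S)"

end

theory Submission
  imports Defs "Jordan_Normal_Form.Determinant"
begin


lemma adj_exists:
  fixes m :: nat and a :: "nat \<Rightarrow> nat \<Rightarrow> int"
  assumes indep: "\<And>v::nat\<Rightarrow>int. (\<forall>j<m. (\<Sum>i<m. v i * a i j) = 0) \<Longrightarrow> (\<forall>i<m. v i = 0)"
  shows "\<exists>D B. D \<noteq> 0 \<and> (\<forall>i<m. \<forall>k<m. (\<Sum>j<m. a i j * B j k) = (if i = k then D else 0))
             \<and> (\<forall>i<m. \<forall>k<m. (\<Sum>j<m. B i j * a j k) = (if i = k then D else 0))"
proof -
  define A where "A = mat m m (\<lambda>(i,j). a i j)"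
  have A: "A \<in> carrier_mat m m" unfolding A_def by simp
  define D where "D = Determinant.det A"
  define B where "B = (\<lambda>j k. adj_mat A $$ (j,k))"
  have adjc: "adj_mat A \<in> carrier_mat m m" using adj_mat(1)[OF A] .
  have D0: "D \<noteq> 0"
  proof
    assume "D = 0"
    then have "Determinant.det (transpose_mat A) = 0" using det_transpose[OF A] D_def by simp
    then obtain v where v: "v \<in> carrier_vec m" "v \<noteq> 0\<^sub>v m" "transpose_mat A *\<^sub>v v = 0\<^sub>v m"
      using det_0_iff_vec_prod_zero[of "transpose_mat A" m] A by auto
    have "\<forall>j<m. (\<Sum>i<m. v $ i * a i j) = 0"
    proof (intro allI impI)
      fix j assume j: "j < m"
      have "(transpose_mat A *\<^sub>v v) $ j = 0" using v(3) j by simp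
      moreover have "(transpose_mat A *\<^sub>v v) $ j = (\<Sum>i<m. a i j * v $ i)"
        using j v(1) A unfolding A_def
        by (simp add: scalar_prod_def atLeast0LessThan)
      ultimately show "(\<Sum>i<m. v $ i * a i j) = 0" by (simp add: mult.commute)
    qed
    then have "\<forall>i<m. v $ i = 0" using indep[of "\<lambda>i. v $ i"] by blast
    then have "v = 0\<^sub>v m" using v(1) by (intro eq_vecI) auto
    with v(2) show False by simp
  qed
  have e1: "\<forall>i<m. \<forall>k<m. (\<Sum>j<m. a i j * B j k) = (if i = k then D else 0)"
  proof (intro allI impI)
    fix i k assume ik: "i < m" "k < m"
    have "(A * adj_mat A) $$ (i,k) = (if i = k then D else 0)"
      using adj_mat(2)[OF A] ik D_def by simp
    moreover have "(A * adj_mat A) $$ (i,k) = (\<Sum>j<m. a i j * B j k)"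
      using ik A adjc unfolding A_def B_def by (simp add: scalar_prod_def atLeast0LessThan)
    ultimately show "(\<Sum>j<m. a i j * B j k) = (if i = k then D else 0)" by simp
  qed
  have e2: "\<forall>i<m. \<forall>k<m. (\<Sum>j<m. B i j * a j k) = (if i = k then D else 0)"
  proof (intro allI impI)
    fix i k assume ik: "i < m" "k < m"
    have "(adj_mat A * A) $$ (i,k) = (if i = k then D else 0)"
      using adj_mat(3)[OF A] ik D_def by simp
    moreover have "(adj_mat A * A) $$ (i,k) = (\<Sum>j<m. B i j * a j k)"
      using ik A adjc unfolding A_def B_def by (simp add: scalar_prod_def atLeast0LessThan)
    ultimately show "(\<Sum>j<m. B i j * a j k) = (if i = k then D else 0)" by simp
  qed
  show ?thesis using D0 e1 e2 by blast
qed




lemma bezout_set: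
  fixes f :: "nat \<Rightarrow> int"
  assumes "finite I"
  shows "\<exists>b. (\<Sum>i\<in>I. b i * f i) = Gcd (f ` I)"
  using assms
proof (induction I rule: finite_induct)
  case empty then show ?case by simp
next
  case (insert x F)
  then obtain b where b: "(\<Sum>i\<in>F. b i * f i) = Gcd (f ` F)" by blast
  obtain u v where uv: "u * f x + v * Gcd (f ` F) = gcd (f x) (Gcd (f ` F))" using bezout_int by blast
  define b' where "b' = (\<lambda>i. if i = x then u else v * b i)"
  have "(\<Sum>i\<in>insert x F. b' i * f i) = u * f x + (\<Sum>i\<in>F. v * b i * f i)"
    using insert(1,2) unfolding b'_def by (auto intro!: sum.cong)
  also have "(\<Sum>i\<in>F. v * b i * f i) = v * (\<Sum>i\<in>F. b i * f i)"
    by (simp add: sum_distrib_left mult.assoc)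
  also have "\<dots> = v * Gcd (f ` F)" using b by simp
  finally show ?case using uv by (auto simp: Gcd_insert)
qed

lemma weights_setup:
  fixes n :: nat and \<alpha> :: "nat \<Rightarrow> nat \<Rightarrow> int"
  assumes n1: "n \<ge> 1" and gp: "general_position n \<alpha>"
  shows "\<exists>c::nat\<Rightarrow>int. (\<forall>i<n. c i \<noteq> 0) \<and> (\<forall>j<n-1. (\<Sum>i<n. c i * \<alpha> i j) = 0) \<and>
    (\<forall>\<phi>::nat\<Rightarrow>real. (\<exists>N::int. (\<Sum>i<n. of_int (c i) * \<phi> i) = 2 * pi * of_int N) \<longrightarrow>
       (\<exists>x::nat\<Rightarrow>real. \<forall>i<n. \<exists>k::int. (\<Sum>j<n-1. of_int (\<alpha> i j) * x j) = \<phi> i + 2 * pi * of_int k))"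
proof -
  obtain m where nm: "n = Suc m" using n1 by (cases n) auto
  have mm: "n - 1 = m" using nm by simp
  have ind: "weights_independent m \<alpha> {..<m}"
    using gp nm unfolding general_position_def by auto
  obtain D B where D0: "D \<noteq> 0"
    and AB: "\<forall>i<m. \<forall>k<m. (\<Sum>j<m. \<alpha> i j * B j k) = (if i = k then D else 0)"
    and BA: "\<forall>i<m. \<forall>k<m. (\<Sum>j<m. B i j * \<alpha> j k) = (if i = k then D else 0)"
    using adj_exists[of m \<alpha>] ind unfolding weights_independent_def by blast
  define e where "e = (\<lambda>k. \<Sum>j<m. \<alpha> m j * B j k)"
  define c' where "c' = (\<lambda>k. if k < m then e k else if k = m then -D else 0)"
  have rel': "(\<Sum>i<n. c' i * \<alpha> i l) = 0" if l: "l < m" for l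
  proof -
    have "(\<Sum>k<m. e k * \<alpha> k l) = (\<Sum>k<m. \<Sum>j<m. \<alpha> m j * (B j k * \<alpha> k l))"
      unfolding e_def by (simp add: sum_distrib_right mult.assoc)
    also have "\<dots> = (\<Sum>j<m. \<alpha> m j * (\<Sum>k<m. B j k * \<alpha> k l))"
      by (subst sum.swap) (simp add: sum_distrib_left)
    also have "\<dots> = (\<Sum>j<m. \<alpha> m j * (if j = l then D else 0))"
      using BA l by (intro sum.cong) auto
    also have "\<dots> = \<alpha> m l * D" using l by (simp add: sum.delta if_distrib cong: if_cong)
    finally have *: "(\<Sum>k<m. e k * \<alpha> k l) = \<alpha> m l * D" .
    have "(\<Sum>i<n. c' i * \<alpha> i l) = (\<Sum>k<m. c' k * \<alpha> k l) + c' m * \<alpha> m l"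
      using nm by simp
    also have "(\<Sum>k<m. c' k * \<alpha> k l) = (\<Sum>k<m. e k * \<alpha> k l)"
      unfolding c'_def by (intro sum.cong) auto
    finally show ?thesis using * by (simp add: c'_def)
  qed
  have c'nz: "c' i \<noteq> 0" if i: "i < n" for i
  proof (cases "i = m")
    case True then show ?thesis using D0 by (simp add: c'_def)
  next
    case False
    then have im: "i < m" using i nm by simp
    show ?thesis
    proof
      assume ci: "c' i = 0"
      define S where "S = {..<n} - {i}"
      have "S \<subseteq> {..<n} \<and> card S = n - 1" unfolding S_def using i by auto
      then have wS: "weights_independent m \<alpha> S" using gp mm unfolding general_position_def by auto
      have "\<forall>j<m. (\<Sum>l\<in>S. c' l * \<alpha> l j) = 0"
      proof (intro allI impI)
        fix j assume j: "j < m"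
        have "(\<Sum>l<n. c' l * \<alpha> l j) = c' i * \<alpha> i j + (\<Sum>l\<in>S. c' l * \<alpha> l j)"
          unfolding S_def using i by (simp add: sum.remove)
        then show "(\<Sum>l\<in>S. c' l * \<alpha> l j) = 0" using rel'[OF j] ci by simp
      qed
      then have "c' m = 0" using wS unfolding weights_independent_def S_def using im nm by auto
      then show False using D0 by (simp add: c'_def)
    qed
  qed
  define g where "g = Gcd (c' ` {..<n})"
  have g0: "g \<noteq> 0" unfolding g_def using c'nz[of m] nm by (auto simp: Gcd_0_iff)
  have gdvd: "g dvd c' i" if "i < n" for i unfolding g_def using that by (intro Gcd_dvd) auto
  define c where "c = (\<lambda>i. c' i div g)"
  have c'c: "c' i = g * c i" if "i < n" for i unfolding c_def using gdvd[OF that] by simp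
  obtain b where b: "(\<Sum>i<n. b i * c' i) = g" using bezout_set[of "{..<n}" c'] g_def by auto
  have P1: "\<forall>i<n. c i \<noteq> 0" using c'nz c'c by fastforce
  have P2: "\<forall>j<n-1. (\<Sum>i<n. c i * \<alpha> i j) = 0"
  proof (intro allI impI)
    fix j assume "j < n - 1"
    then have j: "j < m" using mm by simp
    have "g * (\<Sum>i<n. c i * \<alpha> i j) = (\<Sum>i<n. c' i * \<alpha> i j)"
      by (simp add: sum_distrib_left c'c mult.assoc)
    then show "(\<Sum>i<n. c i * \<alpha> i j) = 0" using rel'[OF j] g0 by simp
  qed
  have P3: "\<exists>x::nat\<Rightarrow>real. \<forall>i<n. \<exists>k::int. (\<Sum>j<n-1. of_int (\<alpha> i j) * x j) = \<phi> i + 2 * pi * of_int k"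
    if N: "(\<Sum>i<n. of_int (c i) * \<phi> i) = 2 * pi * of_int N" for \<phi> :: "nat \<Rightarrow> real" and N :: int
  proof -
    define s where "s = (\<lambda>k. - N * b k)"
    define \<psi> where "\<psi> = (\<lambda>k. \<phi> k + 2 * pi * of_int (s k))"
    define x where "x = (\<lambda>j. (\<Sum>k<m. of_int (B j k) * \<psi> k) / of_int D)"
    have D0r: "real_of_int D \<noteq> 0" using D0 by simp
    have rowlin: "(\<Sum>j<m. of_int (\<alpha> i j) * x j) = (\<Sum>k<m. (\<Sum>j<m. of_int (\<alpha> i j) * of_int (B j k)) * \<psi> k) / of_int D"
      for i
    proof -
      have "(\<Sum>j<m. of_int (\<alpha> i j) * x j) = (\<Sum>j<m. \<Sum>k<m. of_int (\<alpha> i j) * of_int (B j k) * \<psi> k) / of_int D"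
        unfolding x_def by (simp add: sum_divide_distrib sum_distrib_left mult.assoc)
      also have "\<dots> = (\<Sum>k<m. (\<Sum>j<m. of_int (\<alpha> i j) * of_int (B j k)) * \<psi> k) / of_int D"
        by (subst sum.swap) (simp add: sum_distrib_right)
      finally show ?thesis .
    qed
    have rows: "(\<Sum>j<m. of_int (\<alpha> i j) * x j) = \<psi> i" if i: "i < m" for i
    proof -
      have "(\<Sum>k<m. (\<Sum>j<m. real_of_int (\<alpha> i j) * of_int (B j k)) * \<psi> k) =
            (\<Sum>k<m. (if i = k then of_int D else 0) * \<psi> k)"
      proof (intro sum.cong refl)
        fix k assume k: "k \<in> {..<m}"
        have "(\<Sum>j<m. real_of_int (\<alpha> i j) * of_int (B j k)) = of_int (\<Sum>j<m. \<alpha> i j * B j k)" by simp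
        also have "\<dots> = (if i = k then of_int D else 0)" using AB i k by auto
        finally show "(\<Sum>j<m. real_of_int (\<alpha> i j) * of_int (B j k)) * \<psi> k = (if i = k then of_int D else 0) * \<psi> k" by simp
      qed
      also have "\<dots> = (\<Sum>k<m. if k = i then of_int D * \<psi> k else 0)" by (intro sum.cong) auto
      also have "\<dots> = of_int D * \<psi> i" using i by simp
      finally show ?thesis using rowlin[of i] D0r by simp
    qed
    have lastrow: "(\<Sum>j<m. of_int (\<alpha> m j) * x j) = \<phi> m + 2 * pi * of_int (- N * b m)"
    proof -
      have ee: "(\<Sum>j<m. real_of_int (\<alpha> m j) * of_int (B j k)) = of_int (e k)" for k
        unfolding e_def by simp
      have "(\<Sum>j<m. of_int (\<alpha> m j) * x j) = (\<Sum>k<m. of_int (e k) * \<psi> k) / of_int D"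
        using rowlin[of m] ee by simp
      moreover have "(\<Sum>k<m. of_int (e k) * \<psi> k) = of_int D * (\<phi> m + 2 * pi * of_int (- N * b m))"
      proof -
        have A1: "(\<Sum>i<n. of_int (c' i) * \<phi> i) = 2 * pi * of_int (g*N)"
        proof -
          have "(\<Sum>i<n. of_int (c' i) * \<phi> i) = of_int g * (\<Sum>i<n. of_int (c i) * \<phi> i)"
            by (simp add: sum_distrib_left c'c mult.assoc)
          then show ?thesis using N by simp
        qed
        have A2: "(\<Sum>i<n. of_int (c' i) * \<phi> i) = (\<Sum>k<m. of_int (e k) * \<phi> k) - of_int D * \<phi> m"
          using nm by (simp add: c'_def)
        have B1: "(\<Sum>k<m. e k * b k) - D * b m = g"
        proof -
          have "(\<Sum>i<n. b i * c' i) = (\<Sum>k<m. b k * e k) - b m * D" using nm by (simp add: c'_def)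
          then show ?thesis using b by (simp add: mult.commute)
        qed
        have "(\<Sum>k<m. of_int (e k) * \<psi> k) = (\<Sum>k<m. of_int (e k) * \<phi> k) + 2 * pi * of_int (-N) * of_int (\<Sum>k<m. e k * b k)"
          unfolding \<psi>_def s_def by (simp add: algebra_simps sum.distrib sum_distrib_left sum_subtractf sum_negf)
        also have "of_int (\<Sum>k<m. e k * b k) = (of_int (g + D * b m) :: real)" using B1 by (metis diff_eq_eq)
        finally show ?thesis using A1 A2 by (simp add: algebra_simps)
      qed
      ultimately show ?thesis using D0r by simp
    qed
    have "\<forall>i<n. \<exists>k::int. (\<Sum>j<n-1. of_int (\<alpha> i j) * x j) = \<phi> i + 2 * pi * of_int k"
    proof (intro allI impI)
      fix i assume "i < n"
      then have "i < m \<or> i = m" using nm by auto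
      then show "\<exists>k::int. (\<Sum>j<n-1. of_int (\<alpha> i j) * x j) = \<phi> i + 2 * pi * of_int k"
      proof
        assume "i < m" then show ?thesis using rows mm \<psi>_def by auto
      next
        assume "i = m" then show ?thesis using lastrow mm by blast
      qed
    qed
    then show ?thesis by blast
  qed
  show ?thesis using P1 P2 P3 by blast
qed




definition pw :: "complex \<Rightarrow> int \<Rightarrow> complex" where
  "pw z k = (if k \<ge> 0 then z ^ nat k else cnj z ^ nat (- k))"

definition Mon :: "(nat \<Rightarrow> int) \<Rightarrow> nat \<Rightarrow> (nat \<Rightarrow> complex) \<Rightarrow> complex" where
  "Mon c n z = (\<Prod>i<n. pw (z i) (c i))"

lemma unit_exp: "norm (u::complex) = 1 \<Longrightarrow> u = exp (\<i> * of_real (Arg u))"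
proof -
  assume u: "norm u = 1"
  then have "u \<noteq> 0" by auto
  then have "cis (Arg u) = sgn u" by (rule cis_Arg)
  also have "sgn u = u" using u by (simp add: sgn_div_norm)
  finally show ?thesis by (simp add: cis_conv_exp)
qed

lemma exp_powi': "exp (\<i> * of_real a) powi k = exp (\<i> * of_real (of_int k * a))"
  by (simp add: exp_power_int mult_ac)

lemma char_exp:
  assumes "t \<in> torus m"
  shows "character m w t = exp (\<i> * of_real (\<Sum>j<m. of_int (w j) * Arg (t j)))"
proof -
  have ue: "exp (\<i> * of_real (Arg (t j))) = t j" if "j < m" for j
    using assms that unit_exp[of "t j"] unfolding torus_def by auto
  have "character m w t = (\<Prod>j<m. exp (\<i> * of_real (Arg (t j))) powi w j)"
    unfolding character_def by (intro prod.cong refl) (simp add: ue)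
  also have "\<dots> = (\<Prod>j<m. exp (\<i> * of_real (of_int (w j) * Arg (t j))))"
    by (simp only: exp_powi')
  also have "\<dots> = exp (\<Sum>j<m. \<i> * of_real (of_int (w j) * Arg (t j)))"
    by (simp add: exp_sum)
  also have "(\<Sum>j<m. \<i> * of_real (of_int (w j) * Arg (t j))) = \<i> * of_real (\<Sum>j<m. of_int (w j) * Arg (t j))"
    by (simp add: sum_distrib_left)
  finally show ?thesis .
qed

lemma pw_exp: "pw (exp (\<i> * of_real a) * z) k = exp (\<i> * of_real (of_int k * a)) * pw z k"
proof (cases "k \<ge> 0")
  case True
  have "exp (\<i> * of_real a) ^ nat k = exp (of_nat (nat k) * (\<i> * of_real a))"
    by (simp only: exp_of_nat_mult)
  also have "of_nat (nat k) * (\<i> * of_real a) = \<i> * of_real (of_int k * a)" using True by simp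
  finally show ?thesis using True unfolding pw_def by (simp add: power_mult_distrib)
next
  case False
  have "cnj (exp (\<i> * of_real a)) = exp (- \<i> * of_real a)" by (simp add: exp_cnj)
  then have "cnj (exp (\<i> * of_real a)) ^ nat (-k) = exp (of_nat (nat (-k)) * (- \<i> * of_real a))"
    by (simp only: exp_of_nat_mult)
  also have "of_nat (nat (-k)) * (- \<i> * of_real a) = \<i> * of_real (of_int k * a)" using False by simp
  finally show ?thesis using False unfolding pw_def by (simp add: power_mult_distrib)
qed

lemma norm_pw: "norm (pw z k) = norm z ^ nat \<bar>k\<bar>"
  unfolding pw_def by (simp add: norm_power)

lemma pw_zero: "k \<noteq> 0 \<Longrightarrow> pw z k = 0 \<longleftrightarrow> z = 0"
  unfolding pw_def by auto

lemma pw_real: "a \<ge> 0 \<Longrightarrow> pw (of_real a) k = of_real (a ^ nat \<bar>k\<bar>)"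
  unfolding pw_def by auto

lemma Mon_exp:
  "Mon c n (\<lambda>i. exp (\<i> * of_real (\<theta> i)) * z i) = exp (\<i> * of_real (\<Sum>i<n. of_int (c i) * \<theta> i)) * Mon c n z"
proof -
  have "Mon c n (\<lambda>i. exp (\<i> * of_real (\<theta> i)) * z i) = (\<Prod>i<n. exp (\<i> * of_real (of_int (c i) * \<theta> i)) * pw (z i) (c i))"
    unfolding Mon_def by (simp add: pw_exp)
  also have "\<dots> = (\<Prod>i<n. exp (\<i> * of_real (of_int (c i) * \<theta> i))) * Mon c n z"
    unfolding Mon_def by (simp add: prod.distrib)
  also have "(\<Prod>i<n. exp (\<i> * of_real (of_int (c i) * \<theta> i))) = exp (\<Sum>i<n. \<i> * of_real (of_int (c i) * \<theta> i))"
    by (simp add: exp_sum)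
  also have "(\<Sum>i<n. \<i> * of_real (of_int (c i) * \<theta> i)) = \<i> * of_real (\<Sum>i<n. of_int (c i) * \<theta> i)"
    by (simp add: sum_distrib_left)
  finally show ?thesis .
qed

lemma Mon_cong: "(\<And>i. i < n \<Longrightarrow> z i = z' i) \<Longrightarrow> Mon c n z = Mon c n z'"
  unfolding Mon_def by (intro prod.cong) auto

lemma norm_Mon: "norm (Mon c n z) = (\<Prod>i<n. norm (z i) ^ nat \<bar>c i\<bar>)"
  unfolding Mon_def prod_norm[symmetric] norm_pw by (rule refl)

lemma Mon_zero: "(\<forall>i<n. c i \<noteq> 0) \<Longrightarrow> Mon c n z = 0 \<longleftrightarrow> (\<exists>i<n. z i = 0)"
  unfolding Mon_def by (auto simp: pw_zero)

locale wsetup =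
  fixes n :: nat and \<alpha> :: "nat \<Rightarrow> nat \<Rightarrow> int" and c :: "nat \<Rightarrow> int"
  assumes n1: "n \<ge> 1"
    and P1: "\<forall>i<n. c i \<noteq> 0"
    and P2: "\<forall>j<n-1. (\<Sum>i<n. c i * \<alpha> i j) = 0"
    and P3: "\<forall>\<phi>::nat\<Rightarrow>real. (\<exists>N::int. (\<Sum>i<n. of_int (c i) * \<phi> i) = 2 * pi * of_int N) \<longrightarrow>
       (\<exists>x::nat\<Rightarrow>real. \<forall>i<n. \<exists>k::int. (\<Sum>j<n-1. of_int (\<alpha> i j) * x j) = \<phi> i + 2 * pi * of_int k)"
begin

abbreviation "M \<equiv> Mon c n"

lemma act_exp:
  assumes t: "t \<in> torus (n-1)"
  shows "torus_act n \<alpha> t z = (\<lambda>i. if i < n then exp (\<i> * of_real (\<Sum>j<n-1. of_int (\<alpha> i j) * Arg (t j))) * z i else 0)"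
  unfolding torus_act_def by (simp only: char_exp[OF t])

lemma M_invariant:
  assumes t: "t \<in> torus (n-1)"
  shows "M (torus_act n \<alpha> t z) = M z"
proof -
  define \<theta> where "\<theta> = (\<lambda>i. \<Sum>j<n-1. of_int (\<alpha> i j) * Arg (t j))"
  have "M (torus_act n \<alpha> t z) = M (\<lambda>i. exp (\<i> * of_real (\<theta> i)) * z i)"
    unfolding act_exp[OF t] \<theta>_def by (rule Mon_cong) simp
  also have "\<dots> = exp (\<i> * of_real (\<Sum>i<n. of_int (c i) * \<theta> i)) * M z" by (rule Mon_exp)
  also have "(\<Sum>i<n. of_int (c i) * \<theta> i) = 0"
  proof -
    have "(\<Sum>i<n. of_int (c i) * \<theta> i) = (\<Sum>j<n-1. Arg (t j) * of_int (\<Sum>i<n. c i * \<alpha> i j))"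
      unfolding \<theta>_def by (simp add: sum_distrib_left sum_distrib_right mult_ac sum.swap[of _ "{..<n}"])
    also have "\<dots> = 0" using P2 by simp
    finally show ?thesis .
  qed
  finally show ?thesis by simp
qed

lemma norm_char: "t \<in> torus (n-1) \<Longrightarrow> norm (character (n-1) w t) = 1"
  using char_exp[of t "n-1" w] by (simp add: norm_exp)

end




definition tmul :: "(nat \<Rightarrow> complex) \<Rightarrow> (nat \<Rightarrow> complex) \<Rightarrow> (nat \<Rightarrow> complex)" where
  "tmul s t = (\<lambda>j. s j * t j)"

lemma tmul_torus: "s \<in> torus m \<Longrightarrow> t \<in> torus m \<Longrightarrow> tmul s t \<in> torus m"
  unfolding torus_def tmul_def by (auto simp: norm_mult)

lemma tinv_torus: "t \<in> torus m \<Longrightarrow> (\<lambda>j. inverse (t j)) \<in> torus m"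
  unfolding torus_def by (auto simp: norm_inverse)

lemma one_torus: "(\<lambda>j. 1) \<in> torus m"
  unfolding torus_def by auto

lemma character_mul: "character m w (tmul s t) = character m w s * character m w t"
  unfolding character_def tmul_def by (simp add: power_int_mult_distrib prod.distrib)

lemma character_one: "character m w (\<lambda>j. 1) = 1"
  unfolding character_def by simp

lemma act_act: "torus_act n \<alpha> s (torus_act n \<alpha> t z) = torus_act n \<alpha> (tmul s t) z"
  unfolding torus_act_def by (auto simp: character_mul)

lemma act_one: "(\<forall>i\<ge>n. z i = 0) \<Longrightarrow> torus_act n \<alpha> (\<lambda>j. 1) z = z"
  unfolding torus_act_def by (auto simp: character_one)

lemma act_ZS: "\<forall>i\<ge>n. torus_act n \<alpha> t z i = 0"
  unfolding torus_act_def by auto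

lemma orbit_self: "(\<forall>i\<ge>n. z i = 0) \<Longrightarrow> z \<in> torus_orbit n \<alpha> z"
  unfolding torus_orbit_def using act_one[of n z \<alpha>] one_torus[of "n-1"] by (metis image_eqI)

lemma orbit_act:
  assumes t: "t \<in> torus (n-1)"
  shows "torus_orbit n \<alpha> (torus_act n \<alpha> t z) = torus_orbit n \<alpha> z"
proof
  show "torus_orbit n \<alpha> (torus_act n \<alpha> t z) \<subseteq> torus_orbit n \<alpha> z"
    unfolding torus_orbit_def using t by (auto simp: act_act intro!: imageI tmul_torus)
next
  show "torus_orbit n \<alpha> z \<subseteq> torus_orbit n \<alpha> (torus_act n \<alpha> t z)"
  proof
    fix y assume "y \<in> torus_orbit n \<alpha> z"
    then obtain s where s: "s \<in> torus (n-1)" "y = torus_act n \<alpha> s z" unfolding torus_orbit_def by auto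
    define s' where "s' = tmul s (\<lambda>j. inverse (t j))"
    have s'T: "s' \<in> torus (n-1)" unfolding s'_def using s t by (intro tmul_torus tinv_torus)
    have tnz: "t j \<noteq> 0" for j using t unfolding torus_def by (cases "j < n-1") auto
    have "tmul s' t = s" unfolding s'_def tmul_def using tnz by auto
    then have "y = torus_act n \<alpha> s' (torus_act n \<alpha> t z)" using s by (simp add: act_act)
    then show "y \<in> torus_orbit n \<alpha> (torus_act n \<alpha> t z)" unfolding torus_orbit_def using s'T by auto
  qed
qed

lemma orbit_eq_iff:
  assumes "\<forall>i\<ge>n. z i = 0" "\<forall>i\<ge>n. z' i = 0"
  shows "torus_orbit n \<alpha> z = torus_orbit n \<alpha> z' \<longleftrightarrow> (\<exists>t\<in>torus (n-1). torus_act n \<alpha> t z = z')"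
proof
  assume "torus_orbit n \<alpha> z = torus_orbit n \<alpha> z'"
  then have "z' \<in> torus_orbit n \<alpha> z" using orbit_self[OF assms(2)] by simp
  then show "\<exists>t\<in>torus (n-1). torus_act n \<alpha> t z = z'" unfolding torus_orbit_def by auto
next
  assume "\<exists>t\<in>torus (n-1). torus_act n \<alpha> t z = z'"
  then show "torus_orbit n \<alpha> z = torus_orbit n \<alpha> z'" using orbit_act by metis
qed

lemma exp_2pi_int: "exp (\<i> * of_real (a + 2 * pi * of_int k)) = exp (\<i> * of_real a)"
proof -
  have "exp (\<i> * of_real (a + 2 * pi * of_int k)) = exp (\<i> * of_real a) * exp (\<i> * of_real (2 * pi * of_int k))"
    by (simp add: distrib_left exp_add)
  also have "exp (\<i> * of_real (2 * pi * of_int k)) = 1"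
    by (subst exp_eq_1) auto
  finally show ?thesis by simp
qed

context wsetup
begin

lemma separate:
  assumes z: "\<forall>i\<ge>n. z i = 0" and z': "\<forall>i\<ge>n. z' i = 0"
    and nrm: "\<forall>i<n. norm (z' i) = norm (z i)"
    and mon: "(\<forall>i<n. z i \<noteq> 0) \<longrightarrow> M z' = M z"
  shows "\<exists>t\<in>torus (n-1). torus_act n \<alpha> t z = z'"
proof -
  define u where "u = (\<lambda>i. if z i \<noteq> 0 then z' i / z i else 1)"
  have nu: "norm (u i) = 1" if "i < n" for i
    using nrm that unfolding u_def by (auto simp: norm_divide)
  define \<phi>0 where "\<phi>0 = (\<lambda>i. Arg (u i))"
  have eu: "exp (\<i> * of_real (\<phi>0 i)) = u i" if "i < n" for i
    using unit_exp[OF nu[OF that]] unfolding \<phi>0_def by simp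
  have zu: "z' i = u i * z i" if "i < n" "z i \<noteq> 0" for i
    using that unfolding u_def by simp
  obtain \<phi> where phi1: "\<forall>i<n. z i \<noteq> 0 \<longrightarrow> \<phi> i = \<phi>0 i"
    and phi2: "\<exists>N::int. (\<Sum>i<n. of_int (c i) * \<phi> i) = 2 * pi * of_int N"
  proof (cases "\<forall>i<n. z i \<noteq> 0")
    case True
    have "M z' = M (\<lambda>i. exp (\<i> * of_real (\<phi>0 i)) * z i)"
      by (rule Mon_cong) (simp add: eu zu True)
    also have "\<dots> = exp (\<i> * of_real (\<Sum>i<n. of_int (c i) * \<phi>0 i)) * M z" by (rule Mon_exp)
    finally have "exp (\<i> * of_real (\<Sum>i<n. of_int (c i) * \<phi>0 i)) * M z = M z"
      using mon True by simp
    moreover have "M z \<noteq> 0" using Mon_zero[OF P1, of z] True by auto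
    ultimately have "exp (\<i> * of_real (\<Sum>i<n. of_int (c i) * \<phi>0 i)) = 1" by simp
    then obtain N :: int where "(\<Sum>i<n. of_int (c i) * \<phi>0 i) = of_int (2 * N) * pi"
      by (subst (asm) exp_eq_1) auto
    then have "(\<Sum>i<n. of_int (c i) * \<phi>0 i) = 2 * pi * of_int N" by simp
    then show ?thesis using that[of \<phi>0] by blast
  next
    case False
    then obtain p where p: "p < n" "z p = 0" by auto
    define \<phi> where "\<phi> = \<phi>0(p := - (\<Sum>i\<in>{..<n}-{p}. of_int (c i) * \<phi>0 i) / of_int (c p))"
    have cp: "real_of_int (c p) \<noteq> 0" using P1 p by auto
    have "(\<Sum>i<n. of_int (c i) * \<phi> i) = of_int (c p) * \<phi> p + (\<Sum>i\<in>{..<n}-{p}. of_int (c i) * \<phi> i)"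
      using p by (simp add: sum.remove)
    also have "(\<Sum>i\<in>{..<n}-{p}. of_int (c i) * \<phi> i) = (\<Sum>i\<in>{..<n}-{p}. of_int (c i) * \<phi>0 i)"
      unfolding \<phi>_def by (intro sum.cong) auto
    finally have "(\<Sum>i<n. of_int (c i) * \<phi> i) = 2 * pi * of_int (0::int)"
      using cp unfolding \<phi>_def by simp
    moreover have "\<forall>i<n. z i \<noteq> 0 \<longrightarrow> \<phi> i = \<phi>0 i" unfolding \<phi>_def using p by auto
    ultimately show ?thesis using that by blast
  qed
  obtain x where x: "\<forall>i<n. \<exists>k::int. (\<Sum>j<n-1. of_int (\<alpha> i j) * x j) = \<phi> i + 2 * pi * of_int k"
    using P3 phi2 by blast
  define t where "t = (\<lambda>j. if j < n - 1 then exp (\<i> * of_real (x j)) else 1)"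
  have tT: "t \<in> torus (n-1)" unfolding t_def torus_def by (auto simp: norm_exp)
  have chi: "character (n-1) (\<alpha> i) t = exp (\<i> * of_real (\<phi> i))" if i: "i < n" for i
  proof -
    obtain k :: int where k: "(\<Sum>j<n-1. of_int (\<alpha> i j) * x j) = \<phi> i + 2 * pi * of_int k"
      using x i by blast
    have "character (n-1) (\<alpha> i) t = (\<Prod>j<n-1. exp (\<i> * of_real (x j)) powi \<alpha> i j)"
      unfolding character_def t_def by (intro prod.cong) auto
    also have "\<dots> = (\<Prod>j<n-1. exp (\<i> * of_real (of_int (\<alpha> i j) * x j)))"
      by (simp only: exp_powi')
    also have "\<dots> = exp (\<Sum>j<n-1. \<i> * of_real (of_int (\<alpha> i j) * x j))"
      by (simp add: exp_sum)
    also have "(\<Sum>j<n-1. \<i> * of_real (of_int (\<alpha> i j) * x j)) = \<i> * of_real (\<Sum>j<n-1. of_int (\<alpha> i j) * x j)"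
      by (simp add: sum_distrib_left)
    also have "exp (\<i> * of_real (\<Sum>j<n-1. of_int (\<alpha> i j) * x j)) = exp (\<i> * of_real (\<phi> i))"
      unfolding k by (rule exp_2pi_int)
    finally show ?thesis .
  qed
  have "torus_act n \<alpha> t z = z'"
  proof
    fix i show "torus_act n \<alpha> t z i = z' i"
    proof (cases "i < n")
      case True
      show ?thesis
      proof (cases "z i = 0")
        case True
        then have "z' i = 0" using nrm \<open>i < n\<close> by (metis norm_eq_zero)
        then show ?thesis using True unfolding torus_act_def by simp
      next
        case False
        then show ?thesis unfolding torus_act_def using chi[OF \<open>i < n\<close>] phi1 eu zu \<open>i < n\<close> by simp
      qed
    next
      case False then show ?thesis using z z' unfolding torus_act_def by simp
    qed
  qed
  then show ?thesis using tT by blast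
qed

end




definition smin :: "nat \<Rightarrow> (nat \<Rightarrow> complex) \<Rightarrow> real" where
  "smin n z = Min ((\<lambda>i. norm (z i)) ` {..<n})"

definition hh :: "real \<times> complex \<Rightarrow> complex" where
  "hh p = of_real (fst p) * (snd p / of_real (norm (snd p)))"

definition Wf :: "(nat \<Rightarrow> int) \<Rightarrow> nat \<Rightarrow> (nat \<Rightarrow> complex) \<Rightarrow> complex" where
  "Wf c n z = hh (smin n z, Mon c n z)"

definition FF :: "(nat \<Rightarrow> int) \<Rightarrow> nat \<Rightarrow> (nat \<Rightarrow> complex) \<Rightarrow> nat \<Rightarrow> real" where
  "FF c n z = (\<lambda>k. if k = 0 then Re (Wf c n z) else if k = 1 then Im (Wf c n z)
       else if k \<le> n then norm (z (k - 1)) - norm (z 0) else 0)"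

definition wv :: "(nat \<Rightarrow> real) \<Rightarrow> complex" where "wv y = Complex (y 0) (y 1)"
definition dd :: "(nat \<Rightarrow> real) \<Rightarrow> nat \<Rightarrow> real" where "dd y l = (if l = 0 then 0 else y (Suc l))"
definition mu :: "nat \<Rightarrow> (nat \<Rightarrow> real) \<Rightarrow> real" where "mu n y = Min (dd y ` {..<n})"
definition rr :: "nat \<Rightarrow> (nat \<Rightarrow> real) \<Rightarrow> nat \<Rightarrow> real" where "rr n y l = dd y l + cmod (wv y) - mu n y"

lemma norm_div_norm: "norm ((b::complex) / of_real (norm b)) = (if b = 0 then 0 else 1)"
  by (simp add: norm_divide)

lemma Min_shift: "finite S \<Longrightarrow> S \<noteq> {} \<Longrightarrow> Min ((\<lambda>x. f x + k) ` S) = Min (f ` S) + (k::real)"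
  using Min_add_commute[of S f k] by simp

lemma wv_FF: "wv (FF c n z) = Wf c n z"
  unfolding wv_def FF_def by (simp add: complex_eq_iff)

context wsetup
begin

lemma smin_nonneg: "smin n z \<ge> 0"
  unfolding smin_def using n1 by (subst Min_ge_iff) (auto simp: lessThan_empty_iff)

lemma smin_le: "i < n \<Longrightarrow> smin n z \<le> norm (z i)"
  unfolding smin_def by (rule Min_le) auto

lemma smin_pos: "(\<forall>i<n. z i \<noteq> 0) \<Longrightarrow> smin n z > 0"
  unfolding smin_def using n1 by (subst Min_gr_iff) (auto simp: lessThan_empty_iff)

lemma cmod_W: "cmod (Wf c n z) = smin n z"
proof (cases "M z = 0")
  case True
  then obtain i where i: "i < n" "z i = 0" using Mon_zero[OF P1] by auto
  then have "smin n z = 0" using smin_le[OF i(1), of z] smin_nonneg[of z] by simp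
  then show ?thesis unfolding Wf_def hh_def by simp
next
  case False
  have "cmod (Wf c n z) = \<bar>smin n z\<bar> * norm (M z / of_real (norm (M z)))"
    unfolding Wf_def hh_def by (simp only: fst_conv snd_conv norm_mult norm_of_real)
  then show ?thesis using False smin_nonneg[of z] norm_div_norm[of "M z"] by simp
qed

lemma dd_FF: "l < n \<Longrightarrow> dd (FF c n z) l = norm (z l) - norm (z 0)"
  unfolding dd_def FF_def by auto

lemma mu_FF: "mu n (FF c n z) = smin n z - norm (z 0)"
proof -
  have "mu n (FF c n z) = Min ((\<lambda>l. norm (z l) + (- norm (z 0))) ` {..<n})"
    unfolding mu_def by (intro arg_cong[where f=Min] image_cong) (auto simp: dd_FF)
  also have "\<dots> = smin n z - norm (z 0)" unfolding smin_def using n1 by (subst Min_shift) (auto simp: lessThan_empty_iff)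
  finally show ?thesis .
qed

lemma recon: "l < n \<Longrightarrow> rr n (FF c n z) l = norm (z l)"
  unfolding rr_def using dd_FF mu_FF wv_FF cmod_W by simp

lemma F_act:
  assumes t: "t \<in> torus (n-1)"
  shows "FF c n (torus_act n \<alpha> t z) = FF c n z"
proof -
  have nz: "norm (torus_act n \<alpha> t z i) = norm (z i)" if "i < n" for i
    using that norm_char[OF t] unfolding torus_act_def by (simp add: norm_mult)
  have s: "smin n (torus_act n \<alpha> t z) = smin n z"
    unfolding smin_def by (intro arg_cong[where f=Min] image_cong) (auto simp: nz)
  have w: "Wf c n (torus_act n \<alpha> t z) = Wf c n z"
    unfolding Wf_def s M_invariant[OF t] ..
  show ?thesis unfolding FF_def w using nz n1 by (auto intro!: ext)
qed

lemma F_inj: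
  assumes z: "\<forall>i\<ge>n. z i = 0" and z': "\<forall>i\<ge>n. z' i = 0" and eq: "FF c n z = FF c n z'"
  shows "torus_orbit n \<alpha> z = torus_orbit n \<alpha> z'"
proof -
  have nrm: "\<forall>i<n. norm (z' i) = norm (z i)" using recon eq by metis
  have mon: "M z' = M z" if all: "\<forall>i<n. z i \<noteq> 0"
  proof -
    have all': "\<forall>i<n. z' i \<noteq> 0" using all nrm by (metis norm_eq_zero)
    have s: "smin n z' = smin n z"
      unfolding smin_def by (intro arg_cong[where f=Min] image_cong) (auto simp: nrm)
    have sp: "smin n z > 0" using smin_pos[OF all] .
    have W: "Wf c n z = Wf c n z'" using wv_FF eq by metis
    then have "complex_of_real (smin n z) * (M z / of_real (norm (M z))) = complex_of_real (smin n z) * (M z' / of_real (norm (M z')))"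
      unfolding Wf_def hh_def s by (simp only: fst_conv snd_conv)
    then have ph: "M z / of_real (norm (M z)) = M z' / of_real (norm (M z'))"
      using sp by (subst (asm) mult_left_cancel) auto
    have nM: "norm (M z) = norm (M z')" unfolding norm_Mon using nrm by (intro prod.cong) auto
    have "M z \<noteq> 0" using Mon_zero[OF P1] all by auto
    then have nz0: "M z \<noteq> 0" .
    have nz': "M z' \<noteq> 0" using nM nz0 by (metis norm_eq_zero)
    have "M z = (M z / of_real (norm (M z))) * of_real (norm (M z))" using nz0 by simp
    also have "\<dots> = (M z' / of_real (norm (M z'))) * of_real (norm (M z'))" by (metis ph nM)
    also have "\<dots> = M z'" using nz' by simp
    finally show ?thesis by simp
  qed
  have "\<exists>t\<in>torus (n-1). torus_act n \<alpha> t z = z'" by (rule separate[OF z z' nrm]) (use mon in auto)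
  then show ?thesis using orbit_eq_iff[OF z z'] by blast
qed

lemma F_surj:
  assumes y: "\<forall>i\<ge>n+1. y i = 0"
  shows "\<exists>z. (\<forall>i\<ge>n. z i = 0) \<and> FF c n z = y"
proof -
  define w where "w = wv y"
  define \<theta> where "\<theta> = (\<lambda>l::nat. if l = 0 then Arg w / of_int (c 0) else 0)"
  define z where "z = (\<lambda>l. if l < n then exp (\<i> * of_real (\<theta> l)) * of_real (rr n y l) else 0)"
  have mu_le: "mu n y \<le> dd y l" if "l < n" for l unfolding mu_def using that by (intro Min_le) auto
  have rr_ge: "rr n y l \<ge> cmod w" if "l < n" for l unfolding rr_def w_def using mu_le[OF that] by simp
  have nz: "norm (z l) = rr n y l" if "l < n" for l
  proof -
    have "rr n y l \<ge> 0" using rr_ge[OF that] norm_ge_zero[of w] by linarith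
    then show ?thesis using that unfolding z_def by (simp add: norm_mult)
  qed
  have sm: "smin n z = cmod w"
  proof -
    have "smin n z = Min ((\<lambda>l. dd y l + (cmod w - mu n y)) ` {..<n})"
      unfolding smin_def by (intro arg_cong[where f=Min] image_cong) (auto simp: nz rr_def w_def)
    also have "\<dots> = mu n y + (cmod w - mu n y)" unfolding mu_def using n1 by (subst Min_shift) (auto simp: lessThan_empty_iff)
    finally show ?thesis by simp
  qed
  have W: "Wf c n z = w"
  proof (cases "w = 0")
    case True then show ?thesis unfolding Wf_def hh_def using sm by simp
  next
    case False
    have rpos: "rr n y l > 0" if "l < n" for l using rr_ge[OF that] False by (meson less_le_trans zero_less_norm_iff)
    have "M z = M (\<lambda>l. exp (\<i> * of_real (\<theta> l)) * of_real (rr n y l))"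
      by (rule Mon_cong) (simp add: z_def)
    also have "\<dots> = exp (\<i> * of_real (\<Sum>i<n. of_int (c i) * \<theta> i)) * M (\<lambda>l. of_real (rr n y l))"
      by (rule Mon_exp)
    also have "(\<Sum>i<n. of_int (c i) * \<theta> i) = Arg w"
    proof -
      have "(\<Sum>i<n. of_int (c i) * \<theta> i) = (\<Sum>i<n. if i = 0 then of_int (c 0) * (Arg w / of_int (c 0)) else 0)"
        unfolding \<theta>_def by (intro sum.cong) auto
      also have "\<dots> = of_int (c 0) * (Arg w / of_int (c 0))" using n1 by simp
      also have "\<dots> = Arg w" using P1 n1 by simp
      finally show ?thesis .
    qed
    also have "M (\<lambda>l. of_real (rr n y l)) = of_real (\<Prod>i<n. rr n y i ^ nat \<bar>c i\<bar>)"
      unfolding Mon_def using rpos by (simp add: pw_real less_imp_le)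
    finally have Mz0: "M z = exp (\<i> * of_real (Arg w)) * of_real (\<Prod>i<n. rr n y i ^ nat \<bar>c i\<bar>)" .
    define P where "P = (\<Prod>i<n. rr n y i ^ nat \<bar>c i\<bar>)"
    have Mz: "M z = exp (\<i> * of_real (Arg w)) * of_real P" using Mz0 P_def by simp
    have Ppos: "P > 0" unfolding P_def using rpos by (intro prod_pos) auto
    have "norm (M z) = norm (exp (\<i> * of_real (Arg w))) * \<bar>P\<bar>"
      unfolding Mz by (simp only: norm_mult norm_of_real)
    then have nMz: "norm (M z) = P" using Ppos by (simp add: norm_exp)
    have ph: "M z / of_real (norm (M z)) = exp (\<i> * of_real (Arg w))"
      unfolding nMz unfolding Mz using Ppos by simp
    also have "\<dots> = w / of_real (cmod w)" using cis_Arg[OF False] by (simp add: cis_conv_exp sgn_eq)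
    finally have ph2: "M z / of_real (norm (M z)) = w / of_real (cmod w)" .
    have "Wf c n z = of_real (cmod w) * (w / of_real (cmod w))"
      unfolding Wf_def hh_def sm by (simp only: fst_conv snd_conv ph2)
    then show ?thesis using False by simp
  qed
  have "FF c n z = y"
  proof
    fix k show "FF c n z k = y k"
    proof -
      consider "k = 0" | "k = 1" | "2 \<le> k \<and> k \<le> n" | "k > n" by linarith
      then show ?thesis
      proof cases
        case 1 then show ?thesis using W unfolding FF_def w_def wv_def by simp
      next
        case 2 then show ?thesis using W unfolding FF_def w_def wv_def by simp
      next
        case 3
        then have "k - 1 < n" "0 < n" by auto
        then have "FF c n z k = rr n y (k - 1) - rr n y 0" unfolding FF_def using 3 nz by simp
        also have "\<dots> = y k" unfolding rr_def dd_def using 3 by simp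
        finally show ?thesis .
      next
        case 4 then show ?thesis unfolding FF_def using y n1 by simp
      qed
    qed
  qed
  moreover have "\<forall>i\<ge>n. z i = 0" unfolding z_def by simp
  ultimately show ?thesis by blast
qed

lemma F_bound:
  assumes l: "l < n"
  shows "norm (z l) \<le> 3 * (\<Sum>k\<le>n. \<bar>FF c n z k\<bar>)"
proof -
  define y where "y = FF c n z"
  define S where "S = (\<Sum>k\<le>n. \<bar>y k\<bar>)"
  have yk: "\<bar>y k\<bar> \<le> S" if "k \<le> n" for k
    unfolding S_def using that by (intro member_le_sum) auto
  have ddb: "\<bar>dd y j\<bar> \<le> S" if "j < n" for j
    using that yk[of "Suc j"] yk[of 0] unfolding dd_def by (auto simp: S_def intro: sum_nonneg)
  have "\<bar>y 0\<bar> + \<bar>y 1\<bar> = (\<Sum>k\<in>{0,1}. \<bar>y k\<bar>)" by simp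
  also have "\<dots> \<le> S" unfolding S_def using n1 by (intro sum_mono2) auto
  finally have y01: "\<bar>y 0\<bar> + \<bar>y 1\<bar> \<le> S" .
  have wb: "cmod (wv y) \<le> S" unfolding wv_def using cmod_le[of "Complex (y 0) (y 1)"] y01 by simp
  have "Min (dd y ` {..<n}) \<in> dd y ` {..<n}" using n1 by (intro Min_in) (auto simp: lessThan_empty_iff)
  then obtain l0 where l0: "l0 < n" "mu n y = dd y l0" unfolding mu_def by auto
  have "norm (z l) = rr n y l" using recon[OF l] y_def by simp
  also have "\<dots> \<le> S + S + S" unfolding rr_def using ddb[OF l] ddb[OF l0(1)] wb l0(2) by linarith
  finally show ?thesis unfolding S_def y_def by simp
qed

end




lemma cm_cmult:
  fixes f g :: "'a \<Rightarrow> 'b::real_normed_algebra"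
  shows "continuous_map X euclidean f \<Longrightarrow> continuous_map X euclidean g \<Longrightarrow> continuous_map X euclidean (\<lambda>x. f x * g x)"
  by (simp add: continuous_map_atin tendsto_mult)

lemma cm_cprod:
  fixes f :: "'a \<Rightarrow> 'c \<Rightarrow> 'b::{real_normed_algebra,comm_ring_1}"
  shows "finite I \<Longrightarrow> (\<And>i. i \<in> I \<Longrightarrow> continuous_map X euclidean (\<lambda>x. f x i)) \<Longrightarrow> continuous_map X euclidean (\<lambda>x. \<Prod>i\<in>I. f x i)"
  by (simp add: continuous_map_atin tendsto_prod)

lemma cm_pw: "continuous_map X euclidean f \<Longrightarrow> continuous_map X euclidean (\<lambda>x. pw (f x) k)"
  unfolding pw_def by (cases "k \<ge> 0") (simp_all add: continuous_map_atin tendsto_power tendsto_cnj)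

lemma cm_pair: "continuous_map X euclidean f \<Longrightarrow> continuous_map X euclidean g \<Longrightarrow> continuous_map X euclidean (\<lambda>x. (f x, g x))"
  by (simp add: continuous_map_atin tendsto_Pair)

lemma cm_Re: "continuous_map X euclidean f \<Longrightarrow> continuous_map X euclideanreal (\<lambda>x. Re (f x))"
  by (simp add: continuous_map_atin tendsto_Re)

lemma cm_Im: "continuous_map X euclidean f \<Longrightarrow> continuous_map X euclideanreal (\<lambda>x. Im (f x))"
  by (simp add: continuous_map_atin tendsto_Im)

lemma cm_Min:
  assumes "finite I" "I \<noteq> {}"
  shows "(\<And>i. i \<in> I \<Longrightarrow> continuous_map X euclideanreal (f i)) \<Longrightarrow> continuous_map X euclideanreal (\<lambda>x. Min ((\<lambda>i. f i x) ` I))"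
  using assms(1,2)
proof (induction I rule: finite_ne_induct)
  case (singleton a) then show ?case by simp
next
  case (insert a F)
  have "continuous_map X euclideanreal (\<lambda>x. min (f a x) (Min ((\<lambda>i. f i x) ` F)))"
    using insert by (intro continuous_map_real_min) auto
  moreover have "(\<lambda>x. min (f a x) (Min ((\<lambda>i. f i x) ` F))) = (\<lambda>x. Min ((\<lambda>i. f i x) ` insert a F))"
    using insert by (auto intro!: ext simp: Min_insert)
  ultimately show ?case by simp
qed

lemma hh_cont: "continuous_on {p. snd p = 0 \<longrightarrow> fst p = 0} hh"
proof -
  let ?K = "{p::real \<times> complex. snd p = 0 \<longrightarrow> fst p = 0}"
  have "continuous (at p within ?K) hh" if p: "p \<in> ?K" for p
  proof (cases "snd p = 0")
    case True
    then have f0: "fst p = 0" using p by auto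
    have hp: "hh p = 0" unfolding hh_def using True by simp
    have nb: "norm (hh q) \<le> \<bar>fst q\<bar>" for q
    proof -
      have "norm (hh q) = \<bar>fst q\<bar> * norm (snd q / of_real (norm (snd q)))"
        unfolding hh_def by (simp only: norm_mult norm_of_real)
      also have "\<dots> \<le> \<bar>fst q\<bar>" using norm_div_norm[of "snd q"] by (auto simp: mult_le_cancel_left1)
      finally show ?thesis .
    qed
    have "((\<lambda>q. \<bar>fst q\<bar>) \<longlongrightarrow> \<bar>fst p\<bar>) (at p within ?K)"
      by (intro tendsto_rabs tendsto_fst tendsto_ident_at)
    then have "((\<lambda>q. \<bar>fst q\<bar>) \<longlongrightarrow> 0) (at p within ?K)" using f0 by simp
    then have "(hh \<longlongrightarrow> 0) (at p within ?K)"
      by (rule Lim_null_comparison[rotated]) (simp add: nb)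
    then show ?thesis unfolding continuous_within hp .
  next
    case False
    have "continuous (at p) (\<lambda>q::real \<times> complex. of_real (fst q) * (snd q / of_real (norm (snd q))))"
      using False by (intro continuous_intros) auto
    then have "continuous (at p) hh" unfolding hh_def[abs_def] .
    then show ?thesis by (rule continuous_at_imp_continuous_at_within)
  qed
  then show ?thesis by (simp add: continuous_on_eq_continuous_within)
qed

lemma topspace_Complex_space: "topspace (Complex_space n) = {z. \<forall>i\<ge>n. z i = 0}"
  unfolding Complex_space_def by simp

lemma cm_proj: "continuous_map (Complex_space n) euclidean (\<lambda>z. z i)"
  unfolding Complex_space_def
  by (intro continuous_map_from_subtopology) (rule continuous_map_product_projection[of i UNIV "\<lambda>_. euclidean", simplified])

lemma Hausdorff_Complex_space: "Hausdorff_space (Complex_space n)"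
  unfolding Complex_space_def
  by (intro Hausdorff_space_subtopology Hausdorff_space_product_topology[THEN iffD2]) auto

lemma Hausdorff_Euclidean_space: "Hausdorff_space (Euclidean_space n)"
  unfolding Euclidean_space_def
  by (intro Hausdorff_space_subtopology Hausdorff_space_product_topology[THEN iffD2]) auto

lemma cm_Eproj: "continuous_map (Euclidean_space n) euclideanreal (\<lambda>x. x k)"
  unfolding Euclidean_space_def
  by (intro continuous_map_from_subtopology) (rule continuous_map_product_projection[of k UNIV "\<lambda>_. euclideanreal", simplified])

lemma compact_KR: "compactin (Complex_space n) {z. (\<forall>i<n. norm (z i) \<le> R) \<and> (\<forall>i\<ge>n. z i = 0)}"
proof -
  have eq: "{z. (\<forall>i<n. norm (z i) \<le> R) \<and> (\<forall>i\<ge>n. z i = 0)} = PiE UNIV (\<lambda>i. if i < n then cball 0 R else {0})"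
    by (auto simp: PiE_UNIV_domain Pi_def not_less)
  have "compactin (product_topology (\<lambda>_. euclidean) UNIV) (PiE UNIV (\<lambda>i. if i < n then cball (0::complex) R else {0}))"
    by (subst compactin_PiE) auto
  then show ?thesis unfolding Complex_space_def compactin_subtopology eq[symmetric] by auto
qed

lemma quotient_homeo:
  assumes cont: "continuous_map X Y F"
    and surj: "F ` topspace X = topspace Y"
    and eq: "\<And>x x'. x \<in> topspace X \<Longrightarrow> x' \<in> topspace X \<Longrightarrow> cls x = cls x' \<longleftrightarrow> F x = F x'"
    and quot: "\<And>U. U \<subseteq> topspace Y \<Longrightarrow> openin X {x \<in> topspace X. F x \<in> U} \<Longrightarrow> openin Y U"
  shows "quotient_topology X cls homeomorphic_space Y"
proof -
  let ?Q = "quotient_topology X cls"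
  have topQ: "topspace ?Q = cls ` topspace X"
  proof -
    have "{x \<in> topspace X. cls x \<in> cls ` topspace X} = topspace X" by auto
    then have "openin ?Q (cls ` topspace X)" by (simp add: openin_quotient_topology)
    then have "cls ` topspace X \<subseteq> topspace ?Q" by (rule openin_subset)
    moreover have "topspace ?Q \<subseteq> cls ` topspace X"
      using openin_topspace[of ?Q] by (simp only: openin_quotient_topology)
    ultimately show ?thesis by blast
  qed
  define G where "G Ob = F (SOME x. x \<in> topspace X \<and> cls x = Ob)" for Ob
  have G: "G (cls x) = F x" if x: "x \<in> topspace X" for x
  proof -
    have "\<exists>x'. x' \<in> topspace X \<and> cls x' = cls x" using x by blast
    then have "(SOME x'. x' \<in> topspace X \<and> cls x' = cls x) \<in> topspace X \<and> cls (SOME x'. x' \<in> topspace X \<and> cls x' = cls x) = cls x"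
      by (rule someI_ex)
    then show ?thesis unfolding G_def using eq x by blast
  qed
  have Ftop: "F x \<in> topspace Y" if "x \<in> topspace X" for x using surj that by blast
  have c: "continuous_map ?Q Y G"
    unfolding continuous_map_def
  proof (intro conjI allI impI)
    show "G \<in> topspace ?Q \<rightarrow> topspace Y" using topQ G Ftop by auto
  next
    fix V assume V: "openin Y V"
    have "{x \<in> topspace X. cls x \<in> {Ob \<in> topspace ?Q. G Ob \<in> V}} = {x \<in> topspace X. F x \<in> V}"
      using G topQ by auto
    moreover have "openin X {x \<in> topspace X. F x \<in> V}" by (rule openin_continuous_map_preimage[OF cont V])
    ultimately show "openin ?Q {Ob \<in> topspace ?Q. G Ob \<in> V}"
      unfolding openin_quotient_topology using topQ by auto
  qed
  have om: "open_map ?Q Y G"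
    unfolding open_map_def
  proof (intro allI impI)
    fix U assume U: "openin ?Q U"
    then have Usub: "U \<subseteq> cls ` topspace X" and Uo: "openin X {x \<in> topspace X. cls x \<in> U}"
      by (auto simp: openin_quotient_topology)
    have "{x \<in> topspace X. F x \<in> G ` U} = {x \<in> topspace X. cls x \<in> U}"
    proof (rule Set.equalityI; rule Set.subsetI)
      fix x assume "x \<in> {x \<in> topspace X. F x \<in> G ` U}"
      then have x: "x \<in> topspace X" and "F x \<in> G ` U" by auto
      then obtain Ob where Ob: "Ob \<in> U" "F x = G Ob" by auto
      then obtain x' where x': "x' \<in> topspace X" "Ob = cls x'" using Usub by auto
      then have "F x = F x'" using Ob G by simp
      then have "cls x = cls x'" using eq x x' by blast
      then show "x \<in> {x \<in> topspace X. cls x \<in> U}" using Ob x' x by simp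
    next
      fix x assume "x \<in> {x \<in> topspace X. cls x \<in> U}"
      then have "x \<in> topspace X" "cls x \<in> U" by auto
      then show "x \<in> {x \<in> topspace X. F x \<in> G ` U}" using G by (metis (mono_tags, lifting) image_eqI mem_Collect_eq)
    qed
    moreover have "G ` U \<subseteq> topspace Y" using Usub G Ftop by auto
    ultimately show "openin Y (G ` U)" using quot Uo by metis
  qed
  have s: "G ` topspace ?Q = topspace Y" using topQ G surj by (auto simp: image_iff) (metis imageE)
  have i: "inj_on G (topspace ?Q)"
    unfolding inj_on_def topQ using G eq by auto
  have "homeomorphic_map ?Q Y G" by (rule bijective_open_imp_homeomorphic_map[OF c om s i])
  then show ?thesis by (rule homeomorphic_map_imp_homeomorphic_space)
qed




context wsetup
begin

lemma W_cont: "continuous_map (Complex_space n) euclidean (Wf c n)"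
proof -
  let ?K = "{p::real \<times> complex. snd p = 0 \<longrightarrow> fst p = 0}"
  have sc: "continuous_map (Complex_space n) euclideanreal (smin n)"
  proof -
    have "continuous_map (Complex_space n) euclideanreal (\<lambda>z. Min ((\<lambda>i. norm (z i)) ` {..<n}))"
      using n1 by (intro cm_Min) (auto simp: lessThan_empty_iff intro: continuous_map_norm cm_proj)
    then show ?thesis unfolding smin_def[abs_def] .
  qed
  have mc: "continuous_map (Complex_space n) euclidean M"
    unfolding Mon_def[abs_def] by (intro cm_cprod cm_pw cm_proj) auto
  have inK: "(smin n z, M z) \<in> ?K" for z
  proof -
    have "smin n z = 0" if M0: "M z = 0"
    proof -
      obtain i where "i < n" "z i = 0" using M0 Mon_zero[OF P1] by auto
      then show ?thesis using smin_le[of i z] smin_nonneg[of z] by simp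
    qed
    then show ?thesis by auto
  qed
  have g: "continuous_map (Complex_space n) (subtopology euclidean ?K) (\<lambda>z. (smin n z, M z))"
    unfolding continuous_map_in_subtopology using cm_pair[OF sc mc] inK by auto
  have h: "continuous_map (subtopology euclidean ?K) euclidean hh" using hh_cont by simp
  have "continuous_map (Complex_space n) euclidean (hh \<circ> (\<lambda>z. (smin n z, M z)))"
    by (rule continuous_map_compose[OF g h])
  moreover have "hh \<circ> (\<lambda>z. (smin n z, M z)) = Wf c n" unfolding Wf_def[abs_def] by auto
  ultimately show ?thesis by simp
qed

lemma F_cont: "continuous_map (Complex_space n) (Euclidean_space (n+1)) (FF c n)"
  unfolding Euclidean_space_def continuous_map_in_subtopology
proof
  show "continuous_map (Complex_space n) (powertop_real UNIV) (FF c n)"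
    unfolding continuous_map_componentwise_UNIV
  proof
    fix k
    consider "k = 0" | "k = 1" | "2 \<le> k \<and> k \<le> n" | "k > n" by linarith
    then show "continuous_map (Complex_space n) euclideanreal (\<lambda>z. FF c n z k)"
    proof cases
      case 1
      then have "(\<lambda>z. FF c n z k) = (\<lambda>z. Re (Wf c n z))" unfolding FF_def by simp
      then show ?thesis using cm_Re[OF W_cont] by simp
    next
      case 2
      then have "(\<lambda>z. FF c n z k) = (\<lambda>z. Im (Wf c n z))" unfolding FF_def by simp
      then show ?thesis using cm_Im[OF W_cont] by simp
    next
      case 3
      then have "(\<lambda>z. FF c n z k) = (\<lambda>z. norm (z (k - 1)) - norm (z 0))" unfolding FF_def by auto
      then show ?thesis by (simp add: continuous_map_diff continuous_map_norm cm_proj)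
    next
      case 4
      then have "(\<lambda>z. FF c n z k) = (\<lambda>z. 0)" using n1 unfolding FF_def by auto
      then show ?thesis by simp
    qed
  qed
next
  show "FF c n \<in> topspace (Complex_space n) \<rightarrow> {x. \<forall>i\<ge>n + 1. x i = 0}"
    unfolding FF_def using n1 by auto
qed

lemma F_image: "FF c n ` topspace (Complex_space n) = topspace (Euclidean_space (n+1))"
proof
  show "FF c n ` topspace (Complex_space n) \<subseteq> topspace (Euclidean_space (n+1))"
    using F_cont continuous_map_image_subset_topspace by blast
next
  show "topspace (Euclidean_space (n+1)) \<subseteq> FF c n ` topspace (Complex_space n)"
  proof
    fix y assume "y \<in> topspace (Euclidean_space (n+1))"
    then have "\<forall>i\<ge>n+1. y i = 0" by (simp add: topspace_Euclidean_space)
    then obtain z where "\<forall>i\<ge>n. z i = 0" "FF c n z = y" using F_surj by blast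
    then show "y \<in> FF c n ` topspace (Complex_space n)" by (auto simp: topspace_Complex_space)
  qed
qed

definition Bnd :: "(nat \<Rightarrow> real) \<Rightarrow> real" where "Bnd y = 3 * (\<Sum>k\<le>n. \<bar>y k\<bar>)"

lemma F_quot:
  assumes U: "U \<subseteq> topspace (Euclidean_space (n+1))"
    and P: "openin (Complex_space n) {z \<in> topspace (Complex_space n). FF c n z \<in> U}"
  shows "openin (Euclidean_space (n+1)) U"
proof -
  let ?X = "Complex_space n" and ?Y = "Euclidean_space (n+1)"
  let ?P = "{z \<in> topspace ?X. FF c n z \<in> U}"
  have Bc: "continuous_map ?Y euclideanreal Bnd"
    unfolding Bnd_def[abs_def]
    by (intro continuous_map_real_mult_left continuous_map_sum continuous_map_real_abs cm_Eproj) auto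
  show ?thesis
    unfolding openin_subopen[of ?Y U]
  proof
    fix y assume yU: "y \<in> U"
    define R where "R = Bnd y + 1"
    define KR where "KR = {z::nat\<Rightarrow>complex. (\<forall>i<n. norm (z i) \<le> R) \<and> (\<forall>i\<ge>n. z i = 0)}"
    have KRc: "compactin ?X KR" unfolding KR_def by (rule compact_KR)
    have KRsub: "KR \<subseteq> topspace ?X" unfolding KR_def topspace_Complex_space by auto
    define C where "C = KR \<inter> (topspace ?X - ?P)"
    have Ccl: "closedin ?X C" unfolding C_def
      using compactin_imp_closedin[OF Hausdorff_Complex_space KRc] P by (intro closedin_Int closedin_diff) auto
    have Cc: "compactin ?X C" by (rule closed_compactin[OF KRc _ Ccl]) (auto simp: C_def)
    have FCcl: "closedin ?Y (FF c n ` C)"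
      by (rule compactin_imp_closedin[OF Hausdorff_Euclidean_space image_compactin[OF Cc F_cont]])
    define V0 where "V0 = {y' \<in> topspace ?Y. Bnd y' \<in> {..<R}}"
    have V0o: "openin ?Y V0" unfolding V0_def by (rule openin_continuous_map_preimage[OF Bc]) auto
    define V where "V = V0 - FF c n ` C"
    have Vo: "openin ?Y V" unfolding V_def using V0o FCcl by (rule openin_diff)
    have yV: "y \<in> V"
    proof -
      have "y \<in> V0" unfolding V0_def R_def using yU U by auto
      moreover have "y \<notin> FF c n ` C"
      proof
        assume "y \<in> FF c n ` C"
        then obtain z where z: "z \<in> C" "FF c n z = y" by auto
        then have "z \<in> topspace ?X" using KRsub unfolding C_def by auto
        then have "z \<in> ?P" using z yU by auto
        then show False using z unfolding C_def by auto
      qed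
      ultimately show ?thesis unfolding V_def by auto
    qed
    have VU: "V \<subseteq> U"
    proof
      fix y' assume y': "y' \<in> V"
      then have "y' \<in> topspace ?Y" unfolding V_def V0_def by auto
      then obtain z where z: "z \<in> topspace ?X" "FF c n z = y'" using F_image by (metis imageE)
      have "Bnd y' < R" using y' unfolding V_def V0_def by auto
      then have "\<forall>i<n. norm (z i) \<le> R" using F_bound[of _ z] z(2) unfolding Bnd_def by force
      then have "z \<in> KR" using z(1) unfolding KR_def topspace_Complex_space by auto
      moreover have "z \<notin> C" using y' z(2) unfolding V_def by auto
      ultimately have "z \<in> ?P" using z(1) unfolding C_def by auto
      then show "y' \<in> U" using z(2) by auto
    qed
    show "\<exists>T. openin ?Y T \<and> y \<in> T \<and> T \<subseteq> U" using Vo yV VU by blast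
  qed
qed

theorem main: "orbit_space n \<alpha> homeomorphic_space Euclidean_space (n + 1)"
  unfolding orbit_space_def
proof (rule quotient_homeo[OF F_cont F_image])
  fix x x' assume x: "x \<in> topspace (Complex_space n)" and x': "x' \<in> topspace (Complex_space n)"
  then have xz: "\<forall>i\<ge>n. x i = 0" "\<forall>i\<ge>n. x' i = 0" by (auto simp: topspace_Complex_space)
  show "torus_orbit n \<alpha> x = torus_orbit n \<alpha> x' \<longleftrightarrow> FF c n x = FF c n x'"
  proof
    assume "torus_orbit n \<alpha> x = torus_orbit n \<alpha> x'"
    then obtain t where "t \<in> torus (n-1)" "torus_act n \<alpha> t x = x'" using orbit_eq_iff[OF xz] by blast
    then show "FF c n x = FF c n x'" using F_act by metis
  next
    assume "FF c n x = FF c n x'"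
    then show "torus_orbit n \<alpha> x = torus_orbit n \<alpha> x'" using F_inj[OF xz] by blast
  qed
next
  fix U assume "U \<subseteq> topspace (Euclidean_space (n+1))"
    "openin (Complex_space n) {x \<in> topspace (Complex_space n). FF c n x \<in> U}"
  then show "openin (Euclidean_space (n+1)) U" by (rule F_quot)
qed

end



theorem lemma2p11:
  fixes n :: nat and \<alpha> :: "nat \<Rightarrow> nat \<Rightarrow> int"
  assumes "n \<ge> 1"
    and "general_position n \<alpha>"
  shows "orbit_space n \<alpha> homeomorphic_space Euclidean_space (n + 1)"
proof -
  obtain c where c: "(\<forall>i<n. c i \<noteq> 0) \<and> (\<forall>j<n-1. (\<Sum>i<n. c i * \<alpha> i j) = 0) \<and>
    (\<forall>\<phi>::nat\<Rightarrow>real. (\<exists>N::int. (\<Sum>i<n. of_int (c i) * \<phi> i) = 2 * pi * of_int N) \<longrightarrow>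
       (\<exists>x::nat\<Rightarrow>real. \<forall>i<n. \<exists>k::int. (\<Sum>j<n-1. of_int (\<alpha> i j) * x j) = \<phi> i + 2 * pi * of_int k))"
    using weights_setup[OF assms] by blast
  interpret wsetup n \<alpha> c
    using c assms(1) by unfold_locales auto
  show ?thesis by (rule main)
qed

end
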